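(* Let $k$ be even and let $n>k$ be an integer with $n\equiv k/2\pmod k$. Then $\mathrm{msum}(n,k)=1$, and if moreover $n$ is odd, then also $\mathrm{disc}(n,k)=1$.
   Context: Let $n,k$ be positive integers with $n>k$ and let $S_n$ be the set of permutations $\pi=(\pi_1,\dots,\pi_n)$ of $1,\dots,n$. Indices are taken cyclically: $\pi_{n+i}=\pi_i$. The $k$-consecutive sums of $\pi$ are $s_i=\sum_{j=0}^{k-1}\pi_{i+j}$ for $i=1,\dots,n$. Define $\mathrm{msum}(\pi,k)=\max\{s_i: 1\le i\le n\}-\frac{k(n+1)}{2}$, $\mathrm{msum}(n,k)=\min\{\mathrm{msum}(\pi,k):\pi\in S_n\}$, $\mathrm{disc}(\pi,k)=\max\{|s_i-\frac{k(n+1)}{2}|:1\le i\le n\}$ and $\mathrm{disc}(n,k)=\min\{\mathrm{disc}(\pi,k):\pi\in S_n\}$. *)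

theory Defs
  imports Complex_Main "HOL-Combinatorics.Multiset_Permutations"
begin

text \<open>A permutation pi = (pi_1,...,pi_n) of 1..n is a list xs with
  set xs = {1..n} and distinct xs; pi_i is xs ! (i-1).
  The i-th k-consecutive sum (i = 1..n) is written with 0-based index i < n:
  s_i = sum_{j<k} xs ! ((i + j) mod n).\<close>

definition ksum :: "nat list \<Rightarrow> nat \<Rightarrow> nat \<Rightarrow> nat" where
  "ksum xs k i = (\<Sum>j<k. xs ! ((i + j) mod length xs))"

definition msum_perm :: "nat list \<Rightarrow> nat \<Rightarrow> real" where
  "msum_perm xs k =
     Max {real (ksum xs k i) | i. i < length xs} - real k * (real (length xs) + 1) / 2"

definition msum :: "nat \<Rightarrow> nat \<Rightarrow> real" where
  "msum n k = Min ((\<lambda>xs. msum_perm xs k) ` permutations_of_set {1..n})"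

definition disc_perm :: "nat list \<Rightarrow> nat \<Rightarrow> real" where
  "disc_perm xs k =
     Max {\<bar>real (ksum xs k i) - real k * (real (length xs) + 1) / 2\<bar> | i. i < length xs}"

definition disc :: "nat \<Rightarrow> nat \<Rightarrow> real" where
  "disc n k = Min ((\<lambda>xs. disc_perm xs k) ` permutations_of_set {1..n})"

end

theory Submission
  imports Defs
begin


lemma sum_shift1:
  fixes h :: "nat \<Rightarrow> nat"
  assumes "0 < n"
  shows "(\<Sum>i<n. h (Suc i mod n)) = (\<Sum>i<n. h i)"
proof -
  obtain n' where n: "n = Suc n'" using assms by (cases n) auto
  have "(\<Sum>i<Suc n'. h (Suc i mod Suc n')) = (\<Sum>i<n'. h (Suc i)) + h 0"
    by (simp add: sum.lessThan_Suc)
  also have "\<dots> = (\<Sum>i<Suc n'. h i)"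
    using sum.lessThan_Suc_shift[of h n'] by simp
  finally show ?thesis using n by simp
qed

lemma sum_shift:
  fixes h :: "nat \<Rightarrow> nat"
  assumes "0 < n"
  shows "(\<Sum>i<n. h ((i + j) mod n)) = (\<Sum>i<n. h i)"
proof (induction j)
  case 0
  have "(\<Sum>i<n. h (i mod n)) = (\<Sum>i<n. h i)" by (rule sum.cong) auto
  then show ?case by simp
next
  case (Suc j)
  have "(\<Sum>i<n. h ((i + Suc j) mod n)) = (\<Sum>i<n. (\<lambda>x. h ((x + j) mod n)) (Suc i mod n))"
    by (rule sum.cong) (auto simp: mod_add_left_eq)
  also have "\<dots> = (\<Sum>i<n. h ((i + j) mod n))" by (rule sum_shift1[OF assms])
  finally show ?case using Suc by simp
qed

lemma sum_ksum:
  assumes "0 < length xs"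
  shows "(\<Sum>i<length xs. ksum xs k i) = k * (\<Sum>i<length xs. xs ! i)"
proof -
  have "(\<Sum>i<length xs. ksum xs k i) = (\<Sum>j<k. \<Sum>i<length xs. xs ! ((i + j) mod length xs))"
    unfolding ksum_def by (rule sum.swap)
  also have "\<dots> = (\<Sum>j<k. \<Sum>i<length xs. xs ! i)"
    by (rule sum.cong) (auto intro: sum_shift[OF assms])
  finally show ?thesis by simp
qed

lemma ksum_walk:
  assumes "0 < length xs"
  shows "ksum xs k (Suc i) + xs ! (i mod length xs) = ksum xs k i + xs ! ((i + k) mod length xs)"
proof -
  let ?f = "\<lambda>j. xs ! ((i + j) mod length xs)"
  have "ksum xs k (Suc i) = (\<Sum>j<k. ?f (Suc j))" unfolding ksum_def by simp
  moreover have "(\<Sum>j<Suc k. ?f j) = (\<Sum>j<k. ?f (Suc j)) + ?f 0" using sum.lessThan_Suc_shift[of ?f k] by simp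
  moreover have "(\<Sum>j<Suc k. ?f j) = ksum xs k i + ?f k" unfolding ksum_def by simp
  ultimately show ?thesis by simp
qed

lemma perm_sum:
  assumes "xs \<in> permutations_of_set {1..n}"
  shows "length xs = n" "2 * (\<Sum>i<length xs. xs ! i) = n * (n + 1)"
proof -
  have s: "set xs = {1..n}" and d: "distinct xs" using permutations_of_setD[OF assms] by auto
  show l: "length xs = n" using distinct_card[OF d] s by simp
  have "(\<Sum>i<length xs. xs ! i) = sum_list xs" by (simp add: sum_list_sum_nth atLeast0LessThan)
  also have "\<dots> = \<Sum>{1..n}" using sum_list_distinct_conv_sum_set[OF d, of "\<lambda>x. x"] s by simp
  finally show "2 * (\<Sum>i<length xs. xs ! i) = n * (n + 1)"
    using double_gauss_sum_from_Suc_0[of n, where ?'a = nat] by simp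
qed

lemma lower:
  assumes xs: "xs \<in> permutations_of_set {1..n}" and k: "0 < k" "k < n" "even k"
  shows "msum_perm xs k \<ge> 1"
proof -
  have l: "length xs = n" and s2: "2 * (\<Sum>i<length xs. xs ! i) = n * (n + 1)"
    using perm_sum[OF xs] by auto
  have d: "distinct xs" using permutations_of_setD[OF xs] by auto
  obtain m where m: "k = 2 * m" using k(3) by blast
  let ?A = "m * (n + 1)"
  have avg: "real k * (real n + 1) / 2 = real ?A" using m by (simp add: algebra_simps)
  let ?S = "{real (ksum xs k i) | i. i < n}"
  have fin: "finite ?S" by simp
  have ne: "?S \<noteq> {}" using k by auto
  have sumk: "(\<Sum>i<n. ksum xs k i) = n * ?A"
  proof -
    have "(\<Sum>i<n. ksum xs k i) = k * (\<Sum>i<length xs. xs ! i)" using sum_ksum[of xs k] l k by simp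
    then have "2 * (\<Sum>i<n. ksum xs k i) = k * (n * (n+1))" using s2 by (metis mult.left_commute)
    then show ?thesis using m by (simp add: algebra_simps)
  qed
  show ?thesis
  proof (rule ccontr)
    assume "\<not> 1 \<le> msum_perm xs k"
    then have "Max ?S < real ?A + 1" unfolding msum_perm_def l avg by simp
    then have le: "\<forall>i<n. ksum xs k i \<le> ?A"
    proof (intro allI impI)
      fix i assume "Max ?S < real ?A + 1" "i < n"
      then have "real (ksum xs k i) < real ?A + 1"
        using Max_ge[OF fin, of "real (ksum xs k i)"] by fastforce
      then show "ksum xs k i \<le> ?A" by linarith
    qed
    have eq: "\<forall>i<n. ksum xs k i = ?A"
    proof (rule ccontr)
      assume "\<not> (\<forall>i<n. ksum xs k i = ?A)"
      then obtain i where i: "i < n" "ksum xs k i < ?A" using le by fastforce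
      have "(\<Sum>i<n. ksum xs k i) < (\<Sum>i<n. ?A)"
        by (rule sum_strict_mono_ex1) (use le i in auto)
      then show False using sumk by simp
    qed
    have "ksum xs k (Suc 0) + xs ! (0 mod n) = ksum xs k 0 + xs ! ((0 + k) mod n)"
      using ksum_walk[of xs k 0] l k by simp
    then have "xs ! 0 = xs ! k" using eq k by simp
    then show False using d l k nth_eq_iff_index_eq[of xs 0 k] by simp
  qed
qed

lemma disc_ge_msum: "msum_perm xs k \<le> disc_perm xs k"
proof (cases "xs = []")
  case True then show ?thesis by (simp add: msum_perm_def disc_perm_def)
next
  case False
  let ?a = "real k * (real (length xs) + 1) / 2"
  let ?S = "{real (ksum xs k i) | i. i < length xs}"
  let ?T = "{\<bar>real (ksum xs k i) - ?a\<bar> | i. i < length xs}"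
  have fS: "finite ?S" and fT: "finite ?T" by simp_all
  have ne: "?S \<noteq> {}" using False by auto
  obtain x where x: "x \<in> ?S" "Max ?S = x" using Max_in[OF fS ne] by blast
  then obtain i where i: "i < length xs" "x = real (ksum xs k i)" by blast
  have "\<bar>real (ksum xs k i) - ?a\<bar> \<in> ?T" using i by blast
  then have "\<bar>real (ksum xs k i) - ?a\<bar> \<le> Max ?T" using Max_ge[OF fT] by blast
  then show ?thesis unfolding msum_perm_def disc_perm_def using x i by linarith
qed




definition sg :: "nat \<Rightarrow> nat \<Rightarrow> nat" where
  "sg q a = (if even a then a + 1 else 2 * q + 1 - a)"
definition rh :: "nat \<Rightarrow> nat \<Rightarrow> nat" where
  "rh q a = (if even a then a div 2 + 1 else q + 2 + a div 2)"
definition bs :: "nat \<Rightarrow> nat \<Rightarrow> nat \<Rightarrow> nat" where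
  "bs m q a = (if odd m then sg q a else rh q a)"
definition gv :: "nat \<Rightarrow> nat \<Rightarrow> nat \<Rightarrow> nat" where
  "gv m q p = (2 * q + 1) * (p mod m) +
     (if even (p mod m) then bs m q (p div m) else 2 * q + 2 - bs m q (p div m))"

lemma bs_range: "a < 2 * q + 1 \<Longrightarrow> 1 \<le> bs m q a \<and> bs m q a \<le> 2 * q + 1"
  unfolding bs_def sg_def rh_def by (auto; presburger)

lemma bs_inj: "a < 2 * q + 1 \<Longrightarrow> a' < 2 * q + 1 \<Longrightarrow> bs m q a = bs m q a' \<Longrightarrow> a = a'"
  unfolding bs_def sg_def rh_def by (auto split: if_splits, presburger+)

lemma gv_range:
  assumes "0 < m" "p < (2*q+1) * m"
  shows "(2*q+1) * (p mod m) + 1 \<le> gv m q p \<and> gv m q p \<le> (2*q+1) * (p mod m) + (2*q+1)"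
proof -
  have "p div m < 2*q+1" using assms by (simp add: div_less_iff_less_mult mult.commute)
  then show ?thesis using bs_range[of "p div m" q m] unfolding gv_def by auto
qed

lemma gv_inj:
  assumes m: "0 < m" and p: "p < (2*q+1) * m" and p': "p' < (2*q+1) * m"
    and e: "gv m q p = gv m q p'"
  shows "p = p'"
proof -
  let ?N = "2*q+1"
  have r1: "?N * (p mod m) + 1 \<le> gv m q p" "gv m q p \<le> ?N * (p mod m) + ?N"
    using gv_range[OF m p] by auto
  have r2: "?N * (p' mod m) + 1 \<le> gv m q p'" "gv m q p' \<le> ?N * (p' mod m) + ?N"
    using gv_range[OF m p'] by auto
  have "?N * (p mod m) < ?N * Suc (p' mod m)" using r1 r2 e by simp
  then have c1: "p mod m \<le> p' mod m" by (simp only: mult_less_cancel1) simp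
  have "?N * (p' mod m) < ?N * Suc (p mod m)" using r1 r2 e by simp
  then have c2: "p' mod m \<le> p mod m" by (simp only: mult_less_cancel1) simp
  have c: "p mod m = p' mod m" using c1 c2 by simp
  have a1: "p div m < ?N" using p by (rule less_mult_imp_div_less)
  have a2: "p' div m < ?N" using p' by (rule less_mult_imp_div_less)
  have b1: "bs m q (p div m) \<le> ?N" using bs_range[OF a1] by simp
  have b2: "bs m q (p' div m) \<le> ?N" using bs_range[OF a2] by simp
  have "bs m q (p div m) = bs m q (p' div m)"
    using e c b1 b2 unfolding gv_def by (auto split: if_splits)
  then have "p div m = p' div m" using bs_inj[OF a1 a2] by simp
  then show ?thesis using c by (metis div_mult_mod_eq)
qed

lemma gv_perm:
  assumes m: "0 < m"
  shows "map (gv m q) [0..<(2*q+1)*m] \<in> permutations_of_set {1..(2*q+1)*m}"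
proof -
  let ?n = "(2*q+1)*m"
  have inj: "inj_on (gv m q) {0..<?n}"
    by (rule inj_onI) (use gv_inj[OF m] in auto)
  have sub: "gv m q ` {0..<?n} \<subseteq> {1..?n}"
  proof
    fix v assume "v \<in> gv m q ` {0..<?n}"
    then obtain p where p: "p < ?n" "v = gv m q p" by auto
    have r: "(2*q+1) * (p mod m) + 1 \<le> v" "v \<le> (2*q+1) * (p mod m) + (2*q+1)"
      using gv_range[OF m p(1)] p(2) by auto
    have "p mod m < m" using m by simp
    then have "Suc (p mod m) \<le> m" by simp
    then have "(2*q+1) * Suc (p mod m) \<le> ?n" by (simp only: mult_le_cancel1) simp
    then show "v \<in> {1..?n}" using r by simp
  qed
  have "card (gv m q ` {0..<?n}) = ?n" using card_image[OF inj] by simp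
  then have im: "gv m q ` {0..<?n} = {1..?n}"
    using sub by (intro card_subset_eq) auto
  have d: "distinct (map (gv m q) [0..<?n])" using inj by (simp only: distinct_map) simp
  have st: "set (map (gv m q) [0..<?n]) = {1..?n}" using im by (simp only: set_map set_upt)
  show ?thesis using d st by (intro permutations_of_setI)
qed




lemma shift_mod:
  fixes m q p :: nat
  assumes m: "0 < m" and p: "p < (2*q+1) * m"
  shows "(p + 2*m) mod ((2*q+1) * m) = m * ((p div m + 2) mod (2*q+1)) + p mod m"
proof -
  have "(p + 2*m) mod (m * (2*q+1)) = m * ((p + 2*m) div m mod (2*q+1)) + (p + 2*m) mod m"
    by (rule mod_mult2_eq)
  moreover have "(p + 2*m) div m = p div m + 2" using m by simp
  moreover have "(p + 2*m) mod m = p mod m" by simp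
  ultimately show ?thesis by (simp add: mult.commute)
qed

lemma gv_shift:
  fixes m q p :: nat
  assumes m: "0 < m" and p: "p < (2*q+1) * m"
  shows "int (gv m q ((p + 2*m) mod ((2*q+1) * m))) - int (gv m q p) =
     (if even (p mod m) then 1 else -1) *
     (int (bs m q ((p div m + 2) mod (2*q+1))) - int (bs m q (p div m)))"
proof -
  let ?a = "(p div m + 2) mod (2*q+1)"
  have e: "(p + 2*m) mod ((2*q+1) * m) = m * ?a + p mod m" by (rule shift_mod[OF m p])
  have c: "(m * ?a + p mod m) mod m = p mod m" by simp
  have d: "(m * ?a + p mod m) div m = ?a" using m by simp
  have a1: "p div m < 2*q+1" using p by (rule less_mult_imp_div_less)
  have a2: "?a < 2*q+1" by simp
  have b1: "bs m q (p div m) \<le> 2*q+1" using bs_range[OF a1] by simp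
  have b2: "bs m q ?a \<le> 2*q+1" using bs_range[OF a2] by simp
  show ?thesis unfolding e gv_def c d using b1 b2 by (auto simp: of_nat_diff)
qed

definition Do :: "nat \<Rightarrow> nat \<Rightarrow> int" where
  "Do q a = (if a + 2 < 2*q+1 then (if even a then 2 else -2) else -1)"
definition De :: "nat \<Rightarrow> nat \<Rightarrow> int" where
  "De q a = (if a + 2 = 2*q+1 then - 2 * int q else 1)"

lemma sg_diff:
  assumes "a < 2*q+1" and q0: "0 < q"
  shows "int (sg q ((a + 2) mod (2*q+1))) - int (sg q a) = Do q a"
proof -
  consider "a + 2 < 2*q+1" | "a + 2 = 2*q+1" | "a + 2 = 2*q+2" using assms by linarith
  then show ?thesis
  proof cases
    case 1 then show ?thesis unfolding sg_def Do_def by (auto simp: of_nat_diff)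
  next
    case 2
    then have e: "(a+2) mod (2*q+1) = 0" by simp
    have "odd a" using 2 by presburger
    then have "sg q a = 2" using 2 unfolding sg_def by simp
    moreover have "sg q 0 = 1" unfolding sg_def by simp
    ultimately show ?thesis using 2 unfolding e Do_def by simp
  next
    case 3
    then have e: "(a+2) mod (2*q+1) = 1" using q0 by (simp add: mod_if)
    have "even a" using 3 by presburger
    then have "sg q a = 2*q+1" using 3 unfolding sg_def by simp
    moreover have "sg q 1 = 2*q" unfolding sg_def by simp
    ultimately show ?thesis using 3 unfolding e Do_def by simp
  qed
qed

lemma rh_diff:
  assumes "a < 2*q+1" and q0: "0 < q"
  shows "int (rh q ((a + 2) mod (2*q+1))) - int (rh q a) = De q a"
proof -
  consider "a + 2 < 2*q+1" | "a + 2 = 2*q+1" | "a + 2 = 2*q+2" using assms by linarith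
  then show ?thesis
  proof cases
    case 1 then show ?thesis unfolding rh_def De_def by (auto; presburger)
  next
    case 2
    then have e: "(a+2) mod (2*q+1) = 0" by simp
    have "odd a" using 2 by presburger
    moreover have "a div 2 = q - 1" using 2 by presburger
    ultimately have "rh q a = 2*q+1" using 2 unfolding rh_def by simp
    moreover have "rh q 0 = 1" unfolding rh_def by simp
    ultimately show ?thesis using 2 unfolding e De_def by simp
  next
    case 3
    then have e: "(a+2) mod (2*q+1) = 1" using q0 by (simp add: mod_if)
    have "even a" using 3 by presburger
    moreover have "a div 2 = q" using 3 by presburger
    ultimately have "rh q a = q+1" using 3 unfolding rh_def by simp
    moreover have "rh q 1 = q+2" unfolding rh_def by simp
    ultimately show ?thesis using 3 unfolding e De_def by simp
  qed
qed




definition Fo :: "nat \<Rightarrow> nat \<Rightarrow> nat \<Rightarrow> int" where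
  "Fo q a c = (if a + 2 < 2*q+1 then (if even (a + c) then 0 else 2)
     else if a + 2 = 2*q+1 then (if even c then 2 else 1) else (if even c then 1 else 0))"
definition Fe :: "nat \<Rightarrow> nat \<Rightarrow> nat \<Rightarrow> int" where
  "Fe q a c = (if a + 2 = 2*q+1 then (if even c then 0 else - 2 * int q) else (if even c then 0 else 1))"

lemma Fo_in: "a < 2*q+1 \<Longrightarrow> 0 \<le> Fo q a c \<and> Fo q a c \<le> 2"
  unfolding Fo_def by auto
lemma Fe_le: "Fe q a c \<le> 1"
  unfolding Fe_def by auto

lemma Fo_step_in:
  "Fo q a (Suc c) = Fo q a c + (if even c then 1 else -1) * Do q a"
  unfolding Fo_def Do_def by auto

lemma Fo_step_out:
  assumes "even c" "Suc a < 2*q+1"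
  shows "Fo q (Suc a) 0 = Fo q a c + (if even c then 1 else -1) * Do q a"
  using assms unfolding Fo_def Do_def by (auto; presburger)

lemma Fe_step_in:
  "Fe q a (Suc c) = Fe q a c + (if even c then 1 else -1) * De q a"
  unfolding Fe_def De_def by auto

lemma Fe_step_out:
  assumes "odd c" "Suc a < 2*q+1"
  shows "Fe q (Suc a) 0 = Fe q a c + (if even c then 1 else -1) * De q a"
  using assms unfolding Fe_def De_def by auto




lemma sum_split_add: "(\<Sum>j<a+b. f j) = (\<Sum>j<a. f j) + (\<Sum>j<b. f (a + j))"
  for f :: "nat \<Rightarrow> int"
  by (induction b) (simp_all add: add.assoc)

lemma sum_parity: "(\<Sum>c<m. (if even c then A else B)) = int (m - m div 2) * A + int (m div 2) * B"
  for A B :: int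
proof (induction m)
  case 0 then show ?case by simp
next
  case (Suc m)
  show ?case
  proof (cases "even m")
    case True
    then have "Suc m - Suc m div 2 = Suc (m - m div 2)" "Suc m div 2 = m div 2" by presburger+
    then show ?thesis using Suc True by (simp add: algebra_simps)
  next
    case False
    then have "Suc m - Suc m div 2 = m - m div 2" "Suc m div 2 = Suc (m div 2)" by presburger+
    then show ?thesis using Suc False by (simp add: algebra_simps)
  qed
qed

lemma sum_id2: "2 * (\<Sum>c<m. int c) = int m * (int m - 1)"
  by (induction m) (simp_all add: algebra_simps)

locale cons =
  fixes m q :: nat
  assumes m0: "0 < m" and q0: "0 < q"
begin

abbreviation "N \<equiv> (2*q+1)*m"
abbreviation "xs \<equiv> map (gv m q) [0..<N]"

lemma len: "length xs = N" by simp

lemma W_step: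
  assumes "Suc p < N"
  shows "int (ksum xs (2*m) (Suc p)) = int (ksum xs (2*m) p) +
     (if even (p mod m) then 1 else -1) *
     (int (bs m q ((p div m + 2) mod (2*q+1))) - int (bs m q (p div m)))"
proof -
  have pN: "p < N" using assms by simp
  have "0 < length xs" using pN m0 by simp
  from ksum_walk[OF this, of "2*m" p]
  have "ksum xs (2*m) (Suc p) + gv m q p = ksum xs (2*m) p + gv m q ((p + 2*m) mod N)"
    using pN m0 by simp
  then have "int (ksum xs (2*m) (Suc p)) = int (ksum xs (2*m) p) +
      (int (gv m q ((p + 2*m) mod N)) - int (gv m q p))" by linarith
  then show ?thesis using gv_shift[OF m0 pN] by simp
qed

lemma W_walk:
  fixes F :: "nat \<Rightarrow> nat \<Rightarrow> int"
  assumes F0: "F 0 0 = 0"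
    and st: "\<And>p. Suc p < N \<Longrightarrow> F (Suc p div m) (Suc p mod m) = F (p div m) (p mod m) +
     (if even (p mod m) then 1 else -1) *
     (int (bs m q ((p div m + 2) mod (2*q+1))) - int (bs m q (p div m)))"
  shows "p < N \<Longrightarrow> int (ksum xs (2*m) p) = int (ksum xs (2*m) 0) + F (p div m) (p mod m)"
proof (induction p)
  case 0 then show ?case using F0 by simp
next
  case (Suc p)
  then show ?case using W_step[OF Suc.prems] st[OF Suc.prems] by simp
qed

lemma suc_cases:
  obtains "Suc p div m = p div m" "Suc p mod m = Suc (p mod m)"
  | "Suc p div m = Suc (p div m)" "Suc p mod m = 0" "Suc (p mod m) = m"
  using div_Suc[of p m] mod_Suc[of p m] m0 by (cases "Suc (p mod m) = m") auto

lemma W0_expr: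
  "int (ksum xs (2*m) 0) = (\<Sum>c<m. int (gv m q c) + int (gv m q (m + c)))"
proof -
  have "ksum xs (2*m) 0 = (\<Sum>j<2*m. gv m q j)"
    unfolding ksum_def
  proof (rule sum.cong)
    fix j assume "j \<in> {..<2*m}"
    then have jj: "j < 2*m" by simp have "2*m \<le> N" using q0 by (intro mult_le_mono1) simp
    then have "j < N" using jj by linarith
    then show "xs ! ((0 + j) mod length xs) = gv m q j" by simp
  qed simp
  then have "int (ksum xs (2*m) 0) = (\<Sum>j<m+m. int (gv m q j))" by (simp add: mult_2)
  also have "\<dots> = (\<Sum>c<m. int (gv m q c)) + (\<Sum>c<m. int (gv m q (m + c)))"
    by (rule sum_split_add)
  finally show ?thesis by (simp add: sum.distrib)
qed

lemma gv_low: "c < m \<Longrightarrow> gv m q c = (2*q+1)*c + (if even c then bs m q 0 else 2*q+2 - bs m q 0)"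
  unfolding gv_def by simp
lemma gv_high: "c < m \<Longrightarrow> gv m q (m + c) = (2*q+1)*c + (if even c then bs m q 1 else 2*q+2 - bs m q 1)"
  unfolding gv_def using m0 by simp

end




context cons begin

lemma W0_gen:
  assumes "\<And>c. c < m \<Longrightarrow> int (gv m q c) + int (gv m q (m + c)) = 2 * (2 * int q + 1) * int c + (if even c then A else B)"
  shows "2 * int (ksum xs (2*m) 0) = (2 * int q + 1) * (2 * int m * (int m - 1))
     + 2 * (int (m - m div 2) * A + int (m div 2) * B)"
proof -
  have "int (ksum xs (2*m) 0) = (\<Sum>c<m. 2 * (2 * int q + 1) * int c + (if even c then A else B))"
    unfolding W0_expr by (rule sum.cong) (auto simp: assms)
  also have "\<dots> = 2 * (2 * int q + 1) * (\<Sum>c<m. int c) + (\<Sum>c<m. (if even c then A else B))"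
    by (simp add: sum.distrib sum_distrib_left)
  finally have "2 * int (ksum xs (2*m) 0) = (2 * int q + 1) * (2 * (2 * (\<Sum>c<m. int c))) + 2 * (\<Sum>c<m. (if even c then A else B))"
    by (simp add: algebra_simps)
  then show ?thesis by (simp only: sum_id2 sum_parity)
qed

lemma W0_odd:
  assumes "odd m"
  shows "int (ksum xs (2*m) 0) = int m * (int N + 1) - 1"
proof -
  have b0: "bs m q 0 = 1" and b1: "bs m q 1 = 2*q" using assms unfolding bs_def sg_def by auto
  have h: "int (gv m q c) + int (gv m q (m + c)) = 2 * (2 * int q + 1) * int c + (if even c then 2 * int q + 1 else 2 * int q + 3)"
    if "c < m" for c
    using gv_low[OF that] gv_high[OF that] b0 b1 by (auto simp: algebra_simps)
  have e: "2 * int (ksum xs (2*m) 0) = (2 * int q + 1) * (2 * int m * (int m - 1))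
     + 2 * (int (m - m div 2) * (2 * int q + 1) + int (m div 2) * (2 * int q + 3))"
    by (rule W0_gen) (rule h)
  obtain t where t: "m = 2*t+1" using assms oddE by blast
  have "m div 2 = t" "m - m div 2 = t + 1" using t by simp_all
  then show ?thesis using e t by (simp add: algebra_simps)
qed

lemma W0_even:
  assumes "even m"
  shows "int (ksum xs (2*m) 0) = int m * (int N + 1)"
proof -
  have b0: "bs m q 0 = 1" and b1: "bs m q 1 = q + 2" using assms unfolding bs_def rh_def by auto
  have h: "int (gv m q c) + int (gv m q (m + c)) = 2 * (2 * int q + 1) * int c + (if even c then int q + 3 else 3 * int q + 1)"
    if "c < m" for c
    using gv_low[OF that] gv_high[OF that] b0 b1 by (auto simp: algebra_simps)
  have e: "2 * int (ksum xs (2*m) 0) = (2 * int q + 1) * (2 * int m * (int m - 1))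
     + 2 * (int (m - m div 2) * (int q + 3) + int (m div 2) * (3 * int q + 1))"
    by (rule W0_gen) (rule h)
  obtain t where t: "m = 2*t" using assms by blast
  have "m div 2 = t" "m - m div 2 = t" using t by simp_all
  then show ?thesis using e t by (simp add: algebra_simps)
qed

lemma step_odd:
  assumes om: "odd m" and sp: "Suc p < N"
  shows "Fo q (Suc p div m) (Suc p mod m) = Fo q (p div m) (p mod m) +
     (if even (p mod m) then 1 else -1) *
     (int (bs m q ((p div m + 2) mod (2*q+1))) - int (bs m q (p div m)))"
proof -
  have a: "p div m < 2*q+1" using sp by (intro less_mult_imp_div_less) simp
  have bsd: "int (bs m q ((p div m + 2) mod (2*q+1))) - int (bs m q (p div m)) = Do q (p div m)"
    using sg_diff[OF a q0] om unfolding bs_def by simp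
  have a': "Suc p div m < 2*q+1" using sp by (rule less_mult_imp_div_less)
  have "Fo q (Suc p div m) (Suc p mod m) = Fo q (p div m) (p mod m) +
     (if even (p mod m) then 1 else -1) * Do q (p div m)"
  proof (cases rule: suc_cases[of p])
    case 1 then show ?thesis using Fo_step_in[of q "p div m" "p mod m"] by simp
  next
    case 2
    have "even (p mod m)" using om 2(3) by (metis even_Suc)
    then show ?thesis using 2 a' Fo_step_out[of "p mod m" "p div m" q] by simp
  qed
  then show ?thesis using bsd by simp
qed

lemma step_even:
  assumes em: "even m" and sp: "Suc p < N"
  shows "Fe q (Suc p div m) (Suc p mod m) = Fe q (p div m) (p mod m) +
     (if even (p mod m) then 1 else -1) *
     (int (bs m q ((p div m + 2) mod (2*q+1))) - int (bs m q (p div m)))"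
proof -
  have a: "p div m < 2*q+1" using sp by (intro less_mult_imp_div_less) simp
  have bsd: "int (bs m q ((p div m + 2) mod (2*q+1))) - int (bs m q (p div m)) = De q (p div m)"
    using rh_diff[OF a q0] em unfolding bs_def by simp
  have a': "Suc p div m < 2*q+1" using sp by (rule less_mult_imp_div_less)
  have "Fe q (Suc p div m) (Suc p mod m) = Fe q (p div m) (p mod m) +
     (if even (p mod m) then 1 else -1) * De q (p div m)"
  proof (cases rule: suc_cases[of p])
    case 1 then show ?thesis using Fe_step_in[of q "p div m" "p mod m"] by simp
  next
    case 2
    have "odd (p mod m)" using em 2(3) by (metis even_Suc)
    then show ?thesis using 2 a' Fe_step_out[of "p mod m" "p div m" q] by simp
  qed
  then show ?thesis using bsd by simp
qed

lemma W_odd: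
  assumes "odd m" "p < N"
  shows "int (ksum xs (2*m) p) = int (ksum xs (2*m) 0) + Fo q (p div m) (p mod m)"
  by (rule W_walk[OF _ step_odd[OF assms(1)] assms(2)]) (use q0 in \<open>simp add: Fo_def\<close>)

lemma W_even:
  assumes "even m" "p < N"
  shows "int (ksum xs (2*m) p) = int (ksum xs (2*m) 0) + Fe q (p div m) (p mod m)"
  by (rule W_walk[OF _ step_even[OF assms(1)] assms(2)]) (simp add: Fe_def)

end



context cons begin

lemma bound_odd:
  assumes "odd m" "p < N"
  shows "int m * (int N + 1) - 1 \<le> int (ksum xs (2*m) p) \<and> int (ksum xs (2*m) p) \<le> int m * (int N + 1) + 1"
proof -
  have a: "p div m < 2*q+1" using assms(2) by (rule less_mult_imp_div_less)
  show ?thesis using W_odd[OF assms] W0_odd[OF assms(1)] Fo_in[OF a, of "p mod m"] by linarith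
qed

lemma bound_even:
  assumes "even m" "p < N"
  shows "int (ksum xs (2*m) p) \<le> int m * (int N + 1) + 1"
  using W_even[OF assms] W0_even[OF assms(1)] Fe_le[of q "p div m" "p mod m"] by linarith

end

lemma main_constr:
  fixes n k :: nat
  assumes "0 < k" and "even k" and "k < n" and "n mod k = k div 2"
  shows "\<exists>xs \<in> permutations_of_set {1..n}. msum_perm xs k \<le> 1 \<and> (odd n \<longrightarrow> disc_perm xs k \<le> 1)"
proof -
  define m where "m = k div 2"
  define q where "q = n div k"
  have k: "k = 2*m" using assms(2) m_def by simp
  have m0: "0 < m" using assms(1) k by simp
  have nq: "n = q * k + m" using assms(4) m_def q_def by (metis div_mult_mod_eq)
  have q0: "0 < q"
  proof (rule ccontr)
    assume "\<not> 0 < q" then have "n = m" using nq by simp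
    then show False using assms(3) k by simp
  qed
  have nN: "n = (2*q+1)*m" using nq k by (simp add: algebra_simps)
  interpret cons m q using m0 q0 by unfold_locales
  let ?xs = "map (gv m q) [0..<n]"
  have P: "?xs \<in> permutations_of_set {1..n}" using gv_perm[OF m0, of q] nN by simp
  have L: "length ?xs = n" by simp
  have avg: "real k * (real (length ?xs) + 1) / 2 = real m * (real n + 1)" using k by simp
  have fin: "finite {real (ksum ?xs k i) | i. i < length ?xs}" by simp
  have ne: "{real (ksum ?xs k i) | i. i < length ?xs} \<noteq> {}" using assms(3) by auto
  have fin2: "finite {\<bar>real (ksum ?xs k i) - real k * (real (length ?xs) + 1) / 2\<bar> | i. i < length ?xs}" by simp
  have ne2: "{\<bar>real (ksum ?xs k i) - real k * (real (length ?xs) + 1) / 2\<bar> | i. i < length ?xs} \<noteq> {}"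
    using assms(3) by auto
  have up: "real (ksum ?xs k i) \<le> real m * (real n + 1) + 1" if "i < n" for i
  proof (cases "odd m")
    case True
    have "int (ksum ?xs k i) \<le> int m * (int n + 1) + 1" using bound_odd[OF True, of i] that nN k by simp
    also have "int m * (int n + 1) + 1 = int (m * (n + 1) + 1)" by (simp add: algebra_simps)
    finally have "ksum ?xs k i \<le> m * (n + 1) + 1" by (simp only: of_nat_le_iff)
    then have "real (ksum ?xs k i) \<le> real (m * (n + 1) + 1)" by (simp only: of_nat_le_iff)
    then show ?thesis by (simp add: algebra_simps)
  next
    case False
    have "int (ksum ?xs k i) \<le> int m * (int n + 1) + 1" using bound_even[OF _, of i] False that nN k by simp
    also have "int m * (int n + 1) + 1 = int (m * (n + 1) + 1)" by (simp add: algebra_simps)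
    finally have "ksum ?xs k i \<le> m * (n + 1) + 1" by (simp only: of_nat_le_iff)
    then have "real (ksum ?xs k i) \<le> real (m * (n + 1) + 1)" by (simp only: of_nat_le_iff)
    then show ?thesis by (simp add: algebra_simps)
  qed
  have ms: "msum_perm ?xs k \<le> 1"
  proof -
    have "Max {real (ksum ?xs k i) | i. i < length ?xs} \<le> real m * (real n + 1) + 1"
      using fin ne up by (subst Max_le_iff) auto
    then show ?thesis unfolding msum_perm_def avg by simp
  qed
  have ds: "disc_perm ?xs k \<le> 1" if "odd n"
  proof -
    have om: "odd m" using that nN by simp
    have lo: "real m * (real n + 1) - 1 \<le> real (ksum ?xs k i)" if "i < n" for i
    proof -
      have "int m * (int n + 1) - 1 \<le> int (ksum ?xs k i)" using bound_odd[OF om, of i] that nN k by simp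
      then have "int (m * (n + 1)) \<le> int (ksum ?xs k i + 1)" by (simp add: algebra_simps)
      then have "m * (n + 1) \<le> ksum ?xs k i + 1" by (simp only: of_nat_le_iff)
      then have "real (m * (n + 1)) \<le> real (ksum ?xs k i + 1)" by (simp only: of_nat_le_iff)
      then show ?thesis by (simp add: algebra_simps)
    qed
    have "Max {\<bar>real (ksum ?xs k i) - real k * (real (length ?xs) + 1) / 2\<bar> | i. i < length ?xs} \<le> 1"
      proof (subst Max_le_iff[OF fin2 ne2], intro ballI)
      fix x assume "x \<in> {\<bar>real (ksum ?xs k i) - real k * (real (length ?xs) + 1) / 2\<bar> | i. i < length ?xs}"
      then obtain i where i: "i < n" "x = \<bar>real (ksum ?xs k i) - real m * (real n + 1)\<bar>"
        using avg L by auto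
      show "x \<le> 1" using up[OF i(1)] lo[OF i(1)] i(2) by (simp add: abs_le_iff)
    qed
    then show ?thesis unfolding disc_perm_def .
  qed
  show ?thesis using P ms ds by blast
qed




theorem corollary1p5:
  fixes n k :: nat
  assumes "0 < k" and "even k" and "k < n" and "n mod k = k div 2"
  shows "msum n k = 1 \<and> (odd n \<longrightarrow> disc n k = 1)"
proof -
  obtain xs where P: "xs \<in> permutations_of_set {1..n}" and ms: "msum_perm xs k \<le> 1"
    and ds: "odd n \<longrightarrow> disc_perm xs k \<le> 1"
    using main_constr[OF assms] by blast
  let ?P = "permutations_of_set {1..n}"
  have f1: "finite ((\<lambda>xs. msum_perm xs k) ` ?P)" by simp
  have n1: "(\<lambda>xs. msum_perm xs k) ` ?P \<noteq> {}" using P by blast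
  have f2: "finite ((\<lambda>xs. disc_perm xs k) ` ?P)" by simp
  have n2: "(\<lambda>xs. disc_perm xs k) ` ?P \<noteq> {}" using P by blast
  have A: "msum n k = 1"
  proof -
    have "msum n k \<le> msum_perm xs k" unfolding msum_def using P by (intro Min_le[OF f1]) blast
    then have "msum n k \<le> 1" using ms by simp
    moreover have "1 \<le> msum n k"
    proof -
      obtain y where y: "y \<in> ?P" "msum n k = msum_perm y k"
      proof -
        have "Min ((\<lambda>xs. msum_perm xs k) ` ?P) \<in> (\<lambda>xs. msum_perm xs k) ` ?P" by (rule Min_in[OF f1 n1])
        then show ?thesis using that unfolding msum_def by blast
      qed
      show ?thesis using lower[OF y(1) assms(1,3,2)] y(2) by simp
    qed
    ultimately show ?thesis by simp
  qed
  have B: "disc n k = 1" if "odd n"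
  proof -
    have "disc n k \<le> disc_perm xs k" unfolding disc_def using P by (intro Min_le[OF f2]) blast
    then have "disc n k \<le> 1" using ds that by simp
    moreover have "1 \<le> disc n k"
    proof -
      obtain y where y: "y \<in> ?P" "disc n k = disc_perm y k"
      proof -
        have "Min ((\<lambda>xs. disc_perm xs k) ` ?P) \<in> (\<lambda>xs. disc_perm xs k) ` ?P" by (rule Min_in[OF f2 n2])
        then show ?thesis using that unfolding disc_def by blast
      qed
      show ?thesis using lower[OF y(1) assms(1,3,2)] disc_ge_msum[of y k] y(2) by simp
    qed
    ultimately show ?thesis by simp
  qed
  show ?thesis using A B by blast
qed


end
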